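(* Let $S:\overline{\mathcal{D}}\to\widehat{\mathbb{C}}$ be a weak B-involution with $\mathcal{D}=\bigsqcup_{i=1}^k\Omega_i$, let $\Sigma$ be its welded surface and $\mathcal{G}$ its welding graph. Then the connected components of $\Sigma$ are in bijective correspondence with the connected components of $\mathcal{G}$.
   Context: $\Omega_1,\dots,\Omega_k$ are pairwise disjoint finitely connected proper subdomains of $\widehat{\mathbb{C}}$ with $\mathrm{int}(\overline{\Omega_i})=\Omega_i$; $X\subset\partial\mathcal{D}$ finite with $\partial^0\mathcal{D}=\partial\mathcal{D}\setminus X$ a finite union of disjoint non-singular real-analytic curves; $S$ continuous on $\overline{\mathcal{D}}$, meromorphic on $\mathcal{D}$, mapping $\partial\mathcal{D}$ to itself and $X$ to itself with $S\circ S=\mathrm{id}$ on $\partial\mathcal{D}$, orientation-reversing on $\partial^0\mathcal{D}$. Set $\partial^0\Omega_i=\partial^0\mathcal{D}\cap\overline{\Omega_i}$. The welded surface $\Sigma$ is the compactification (by filling in punctures) of the Riemann surface obtained from two copies of $\mathcal{D}\cup\partial^0\mathcal{D}$ by identifying each $x\in\partial^0\mathcal{D}$ in the first copy with $S(x)$ in the second copy (this is a finite union of compact Riemann surfaces). The copies of $\Omega_i$ in the two copies are denoted $\Omega_i^\pm$. The welding graph $\mathcal{G}$ has vertices $v_1^\pm,\dots,v_k^\pm$, and edges exactly between $v_{i_1}^-$ and $v_{i_2}^+$ whenever $S(\partial^0\Omega_{i_1})\cap\partial^0\Omega_{i_2}\ne\emptyset$. *)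

theory Defs
  imports "HOL-Complex_Analysis.Complex_Analysis"
begin

section \<open>The Riemann sphere, modelled as complex option (None = infinity)\<close>

definition rs_open :: "complex option set \<Rightarrow> bool" where
  "rs_open U \<longleftrightarrow> open {z. Some z \<in> U} \<and>
     (None \<in> U \<longrightarrow> (\<exists>R. \<forall>z. norm z > R \<longrightarrow> Some z \<in> U))"

lemma istopology_rs_open: "istopology rs_open"
  unfolding istopology_def
proof (intro conjI allI impI)
  fix S T assume S: "rs_open S" and T: "rs_open T"
  have e: "{z. Some z \<in> S \<inter> T} = {z. Some z \<in> S} \<inter> {z. Some z \<in> T}" by auto
  have o: "open {z. Some z \<in> S \<inter> T}"
    using S T unfolding rs_open_def e by (intro open_Int) auto
  show "rs_open (S \<inter> T)"
    unfolding rs_open_def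
  proof (intro conjI impI)
    show "open {z. Some z \<in> S \<inter> T}" by (fact o)
    assume "None \<in> S \<inter> T"
    then obtain R1 R2 where "\<forall>z. norm z > R1 \<longrightarrow> Some z \<in> S" "\<forall>z. norm z > R2 \<longrightarrow> Some z \<in> T"
      using S T unfolding rs_open_def by blast
    then show "\<exists>R. \<forall>z. norm z > R \<longrightarrow> Some z \<in> S \<inter> T"
      by (intro exI[of _ "max R1 R2"]) auto
  qed
next
  fix K assume K: "\<forall>S\<in>K. rs_open S"
  have e: "{z. Some z \<in> \<Union>K} = (\<Union>S\<in>K. {z. Some z \<in> S})" by auto
  have o: "open (\<Union>S\<in>K. {z. Some z \<in> S})"
    using K unfolding rs_open_def by (intro open_UN) auto
  show "rs_open (\<Union>K)"
    unfolding rs_open_def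
  proof (intro conjI impI)
    show "open {z. Some z \<in> \<Union>K}" using o e by simp
    assume "None \<in> \<Union>K"
    then obtain S where "S \<in> K" "None \<in> S" by blast
    then obtain R where "\<forall>z. norm z > R \<longrightarrow> Some z \<in> S" using K unfolding rs_open_def by blast
    then show "\<exists>R. \<forall>z. norm z > R \<longrightarrow> Some z \<in> \<Union>K" using \<open>S \<in> K\<close> by blast
  qed
qed

definition riemann_sphere :: "complex option topology" where
  "riemann_sphere = topology rs_open"

text \<open>The two standard charts: (domain, chart map, inverse chart map).\<close>

definition chart_inf :: "complex option \<Rightarrow> complex" where
  "chart_inf p = (case p of None \<Rightarrow> 0 | Some z \<Rightarrow> inverse z)"

definition chart_inf_inv :: "complex \<Rightarrow> complex option" where
  "chart_inf_inv w = (if w = 0 then None else Some (inverse w))"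

definition rs_charts ::
  "(complex option set \<times> (complex option \<Rightarrow> complex) \<times> (complex \<Rightarrow> complex option)) set" where
  "rs_charts = {(- {None}, (\<lambda>p. case p of Some z \<Rightarrow> z | None \<Rightarrow> 0), Some),
                (- {Some 0}, chart_inf, chart_inf_inv)}"

definition rs_holomorphic_on :: "(complex option \<Rightarrow> complex option) \<Rightarrow> complex option set \<Rightarrow> bool" where
  "rs_holomorphic_on f U \<longleftrightarrow> openin riemann_sphere U \<and>
     continuous_map (subtopology riemann_sphere U) riemann_sphere f \<and>
     (\<forall>(A, \<phi>, \<psi>) \<in> rs_charts. \<forall>(B, \<kappa>, \<xi>) \<in> rs_charts.
        (\<kappa> \<circ> f \<circ> \<psi>) holomorphic_on {z. \<psi> z \<in> U \<inter> A \<and> f (\<psi> z) \<in> B})"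

definition rs_meromorphic_on :: "(complex option \<Rightarrow> complex option) \<Rightarrow> complex option set \<Rightarrow> bool" where
  "rs_meromorphic_on f U \<longleftrightarrow> rs_holomorphic_on f U \<and>
     (\<forall>C \<in> connected_components_of (subtopology riemann_sphere U). \<exists>p\<in>C. f p \<noteq> None)"

definition real_analytic_on :: "(real \<Rightarrow> complex) \<Rightarrow> real set \<Rightarrow> bool" where
  "real_analytic_on g T \<longleftrightarrow> (\<forall>t\<in>T. \<exists>r>0. \<exists>c::nat \<Rightarrow> complex.
      \<forall>s. \<bar>s - t\<bar> < r \<longrightarrow> (\<lambda>n. c n * of_real (s - t) ^ n) sums g s)"

definition rs_regular_analytic_at :: "(real \<Rightarrow> complex option) \<Rightarrow> real \<Rightarrow> bool" where
  "rs_regular_analytic_at \<gamma> t \<longleftrightarrow> (\<exists>(A, \<phi>, \<psi>) \<in> rs_charts. \<exists>e>0.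
      (\<forall>s. \<bar>s - t\<bar> < e \<longrightarrow> \<gamma> s \<in> A) \<and>
      real_analytic_on (\<phi> \<circ> \<gamma>) {t - e<..<t + e} \<and>
      (\<exists>v. v \<noteq> 0 \<and> ((\<phi> \<circ> \<gamma>) has_vector_derivative v) (at t)))"

text \<open>A non-singular real-analytic curve: an embedded open analytic arc, or an analytic
  Jordan curve (periodic parametrisation, injective on a period).\<close>
definition rs_analytic_curve :: "complex option set \<Rightarrow> bool" where
  "rs_analytic_curve C \<longleftrightarrow>
    (\<exists>\<gamma> a b. a < b \<and> C = \<gamma> ` {a<..<b} \<and>
        homeomorphic_map (subtopology euclideanreal {a<..<b}) (subtopology riemann_sphere C) \<gamma> \<and>
        (\<forall>t\<in>{a<..<b}. rs_regular_analytic_at \<gamma> t)) \<or>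
    (\<exists>\<gamma> p. p > 0 \<and> (\<forall>t. \<gamma> (t + p) = \<gamma> t) \<and> inj_on \<gamma> {0..<p} \<and> C = \<gamma> ` {0..<p} \<and>
        (\<forall>t. rs_regular_analytic_at \<gamma> t))"

definition rs_left_of :: "complex option set \<Rightarrow> (real \<Rightarrow> complex option) \<Rightarrow> real \<Rightarrow> bool" where
  "rs_left_of D \<gamma> t \<longleftrightarrow> (\<exists>(A, \<phi>, \<psi>) \<in> rs_charts. \<exists>e>0. \<exists>v.
      (\<forall>s. \<bar>s - t\<bar> < e \<longrightarrow> \<gamma> s \<in> A) \<and> v \<noteq> 0 \<and>
      ((\<phi> \<circ> \<gamma>) has_vector_derivative v) (at t) \<and>
      (\<forall>d. 0 < d \<and> d < e \<longrightarrow> \<psi> (\<phi> (\<gamma> t) + \<i> * of_real d * v) \<in> D))"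

definition pos_local_param ::
  "complex option set \<Rightarrow> complex option set \<Rightarrow> (real \<Rightarrow> complex option) \<Rightarrow> real \<Rightarrow> real \<Rightarrow> bool" where
  "pos_local_param D E \<gamma> a b \<longleftrightarrow> a < b \<and> inj_on \<gamma> {a<..<b} \<and> \<gamma> ` {a<..<b} \<subseteq> E \<and>
      (\<forall>t\<in>{a<..<b}. rs_regular_analytic_at \<gamma> t \<and> rs_left_of D \<gamma> t)"

definition orientation_reversing_on ::
  "complex option set \<Rightarrow> (complex option \<Rightarrow> complex option) \<Rightarrow> complex option set \<Rightarrow> bool" where
  "orientation_reversing_on D S E \<longleftrightarrow>
    (\<forall>\<gamma>1 a1 b1 \<gamma>2 a2 b2 s t s' t'.
       pos_local_param D E \<gamma>1 a1 b1 \<and> pos_local_param D E \<gamma>2 a2 b2 \<and>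
       a1 < s \<and> s < t \<and> t < b1 \<and>
       (\<forall>u\<in>{s..t}. S (\<gamma>1 u) \<in> \<gamma>2 ` {a2<..<b2}) \<and>
       s' \<in> {a2<..<b2} \<and> t' \<in> {a2<..<b2} \<and> S (\<gamma>1 s) = \<gamma>2 s' \<and> S (\<gamma>1 t) = \<gamma>2 t'
       \<longrightarrow> t' < s')"

definition rs_boundary0 :: "(nat \<Rightarrow> complex option set) \<Rightarrow> nat \<Rightarrow> complex option set \<Rightarrow> complex option set" where
  "rs_boundary0 \<Omega> k X = riemann_sphere frontier_of (\<Union>i\<in>{1..k}. \<Omega> i) - X"

definition weak_B_involution ::
  "(nat \<Rightarrow> complex option set) \<Rightarrow> nat \<Rightarrow> complex option set \<Rightarrow> (complex option \<Rightarrow> complex option) \<Rightarrow> bool" where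
  "weak_B_involution \<Omega> k X S \<longleftrightarrow>
    (let D = (\<Union>i\<in>{1..k}. \<Omega> i); bD = riemann_sphere frontier_of D; b0D = bD - X in
     (\<forall>i\<in>{1..k}.
        openin riemann_sphere (\<Omega> i) \<and> connectedin riemann_sphere (\<Omega> i) \<and>
        \<Omega> i \<noteq> {} \<and> \<Omega> i \<noteq> UNIV \<and>
        finite (connected_components_of (subtopology riemann_sphere (- \<Omega> i))) \<and>
        riemann_sphere interior_of (riemann_sphere closure_of (\<Omega> i)) = \<Omega> i) \<and>
     (\<forall>i\<in>{1..k}. \<forall>j\<in>{1..k}. i \<noteq> j \<longrightarrow> \<Omega> i \<inter> \<Omega> j = {}) \<and>
     finite X \<and> X \<subseteq> bD \<and>
     (\<exists>\<C>. finite \<C> \<and> b0D = \<Union>\<C> \<and> (\<forall>C\<in>\<C>. rs_analytic_curve C) \<and>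
          (\<forall>C1\<in>\<C>. \<forall>C2\<in>\<C>. C1 \<noteq> C2 \<longrightarrow> C1 \<inter> C2 = {})) \<and>
     continuous_map (subtopology riemann_sphere (riemann_sphere closure_of D)) riemann_sphere S \<and>
     rs_meromorphic_on S D \<and>
     S ` bD \<subseteq> bD \<and> S ` X \<subseteq> X \<and> (\<forall>x\<in>bD. S (S x) = x) \<and>
     orientation_reversing_on D S b0D)"

text \<open>Disjoint union of two copies of D union its regular boundary; copy False is the first
  copy (Omega_i^-), copy True the second (Omega_i^+).\<close>
definition weld_pre :: "(nat \<Rightarrow> complex option set) \<Rightarrow> nat \<Rightarrow> complex option set \<Rightarrow> (bool \<times> complex option) topology" where
  "weld_pre \<Omega> k X = sum_topology (\<lambda>_. subtopology riemann_sphere ((\<Union>i\<in>{1..k}. \<Omega> i) \<union> rs_boundary0 \<Omega> k X)) UNIV"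

definition weld_rel :: "(nat \<Rightarrow> complex option set) \<Rightarrow> nat \<Rightarrow> complex option set \<Rightarrow> (complex option \<Rightarrow> complex option)
    \<Rightarrow> bool \<times> complex option \<Rightarrow> bool \<times> complex option \<Rightarrow> bool" where
  "weld_rel \<Omega> k X S u v \<longleftrightarrow> u = v \<or>
     (fst u = False \<and> fst v = True \<and> snd u \<in> rs_boundary0 \<Omega> k X \<and> snd v = S (snd u)) \<or>
     (fst v = False \<and> fst u = True \<and> snd v \<in> rs_boundary0 \<Omega> k X \<and> snd u = S (snd v))"

text \<open>Z (with the map j) is the welded surface Sigma: j is a quotient map from the disjoint union
  onto an open subspace W of Z with fibres exactly the gluing classes, Z is compact, Z - W is
  finite and every point of Z - W is a filled-in puncture (it has an open neighbourhood U meeting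
  Z - W only in that point, homeomorphic to the unit disc with the point going to 0).\<close>
definition is_welded_surface :: "(nat \<Rightarrow> complex option set) \<Rightarrow> nat \<Rightarrow> complex option set \<Rightarrow> (complex option \<Rightarrow> complex option)
    \<Rightarrow> 'z topology \<Rightarrow> (bool \<times> complex option \<Rightarrow> 'z) \<Rightarrow> bool" where
  "is_welded_surface \<Omega> k X S Z j \<longleftrightarrow>
    (let W = j ` topspace (weld_pre \<Omega> k X) in
      openin Z W \<and>
      quotient_map (weld_pre \<Omega> k X) (subtopology Z W) j \<and>
      (\<forall>u\<in>topspace (weld_pre \<Omega> k X). \<forall>v\<in>topspace (weld_pre \<Omega> k X).
          j u = j v \<longleftrightarrow> weld_rel \<Omega> k X S u v) \<and>
      compact_space Z \<and> finite (topspace Z - W) \<and>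
      (\<forall>z\<in>topspace Z - W. \<exists>U h. openin Z U \<and> z \<in> U \<and> U \<inter> (topspace Z - W) = {z} \<and>
          homeomorphic_map (subtopology Z U) (top_of_set (ball (0::complex) 1)) h \<and> h z = 0))"

text \<open>Welding graph: vertices (b, i), b = False for v_i^-, b = True for v_i^+, i in {1..k};
  an edge between v_i1^- and v_i2^+ iff S(d0 Omega_i1) meets d0 Omega_i2.\<close>
definition bdry0_piece :: "(nat \<Rightarrow> complex option set) \<Rightarrow> nat \<Rightarrow> complex option set \<Rightarrow> nat \<Rightarrow> complex option set" where
  "bdry0_piece \<Omega> k X i = rs_boundary0 \<Omega> k X \<inter> riemann_sphere closure_of (\<Omega> i)"

definition welding_edge :: "(nat \<Rightarrow> complex option set) \<Rightarrow> nat \<Rightarrow> complex option set \<Rightarrow> (complex option \<Rightarrow> complex option)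
    \<Rightarrow> (bool \<times> nat) \<Rightarrow> (bool \<times> nat) \<Rightarrow> bool" where
  "welding_edge \<Omega> k X S u v \<longleftrightarrow> snd u \<in> {1..k} \<and> snd v \<in> {1..k} \<and>
     ((fst u = False \<and> fst v = True \<and> S ` bdry0_piece \<Omega> k X (snd u) \<inter> bdry0_piece \<Omega> k X (snd v) \<noteq> {}) \<or>
      (fst v = False \<and> fst u = True \<and> S ` bdry0_piece \<Omega> k X (snd v) \<inter> bdry0_piece \<Omega> k X (snd u) \<noteq> {}))"

definition welding_vertices :: "nat \<Rightarrow> (bool \<times> nat) set" where
  "welding_vertices k = UNIV \<times> {1..k}"

definition welding_component :: "(nat \<Rightarrow> complex option set) \<Rightarrow> nat \<Rightarrow> complex option set \<Rightarrow> (complex option \<Rightarrow> complex option)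
    \<Rightarrow> bool \<times> nat \<Rightarrow> (bool \<times> nat) set" where
  "welding_component \<Omega> k X S v =
     {w \<in> welding_vertices k. (v, w) \<in> {(a, b). welding_edge \<Omega> k X S a b}\<^sup>*}"

definition welding_components :: "(nat \<Rightarrow> complex option set) \<Rightarrow> nat \<Rightarrow> complex option set \<Rightarrow> (complex option \<Rightarrow> complex option)
    \<Rightarrow> (bool \<times> nat) set set" where
  "welding_components \<Omega> k X S = welding_component \<Omega> k X S ` welding_vertices k"

end

theory Submission
  imports Defs
begin


lemma punct_disc:
  fixes Z :: "'z topology"
  assumes U: "openin Z U" and z: "z \<in> U"
    and h: "homeomorphic_map (subtopology Z U) (top_of_set (ball (0::complex) 1)) h" and hz: "h z = 0"
  shows "connectedin Z U" "connectedin Z (U - {z})" "U - {z} \<noteq> {}"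
proof -
  obtain g where g: "homeomorphic_maps (subtopology Z U) (top_of_set (ball (0::complex) 1)) h g"
    using h homeomorphic_map_maps by blast
  have UZ: "U \<subseteq> topspace Z" using U openin_subset by blast
  have tsU: "topspace (subtopology Z U) = U" using UZ by auto
  have gc: "continuous_map (top_of_set (ball (0::complex) 1)) (subtopology Z U) g"
    and hc: "continuous_map (subtopology Z U) (top_of_set (ball (0::complex) 1)) h"
    and gh: "\<forall>x\<in>U. g (h x) = x" and hg: "\<forall>y\<in>ball 0 1. h (g y) = y"
    using g tsU unfolding homeomorphic_maps_def by auto
  have hU: "\<forall>x\<in>U. h x \<in> ball 0 1" using hc tsU unfolding continuous_map_def by auto
  have gB: "\<forall>y\<in>ball 0 1. g y \<in> U" using gc tsU unfolding continuous_map_def by auto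
  have e1: "U = g ` ball 0 1"
  proof
    show "U \<subseteq> g ` ball 0 1"
    proof
      fix x assume "x \<in> U" then show "x \<in> g ` ball 0 1" using gh hU by (metis image_eqI)
    qed
  qed (use gB in auto)
  have e2: "U - {z} = g ` (ball 0 1 - {0})"
  proof
    show "U - {z} \<subseteq> g ` (ball 0 1 - {0})"
    proof
      fix x assume x: "x \<in> U - {z}"
      then have "h x \<noteq> 0" using gh hz z by (metis DiffE singletonI)
      then show "x \<in> g ` (ball 0 1 - {0})" using x gh hU by (metis DiffD1 DiffI image_eqI singletonD)
    qed
    show "g ` (ball 0 1 - {0}) \<subseteq> U - {z}"
    proof
      fix x assume "x \<in> g ` (ball 0 1 - {0})"
      then obtain y where y: "y \<in> ball 0 1" "y \<noteq> 0" "x = g y" by blast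
      then show "x \<in> U - {z}" using gB hg hz by (metis DiffI singletonD)
    qed
  qed
  have cb: "connectedin (top_of_set (ball (0::complex) 1)) (ball 0 1)"
    by (simp add: connectedin_subtopology)
  have cpb: "connectedin (top_of_set (ball (0::complex) 1)) (ball 0 1 - {0})"
    using connected_punctured_ball[of "0::complex" "1::real"] by (auto simp: connectedin_subtopology)
  show "connectedin Z U"
    using connectedin_continuous_map_image[OF gc cb] e1 connectedin_subtopology by metis
  show "connectedin Z (U - {z})"
    using connectedin_continuous_map_image[OF gc cpb] e2 connectedin_subtopology by metis
  have "(1/2::complex) \<in> ball 0 1 - {0}" by auto
  then show "U - {z} \<noteq> {}" using e2 by blast
qed

lemma connectedin_split:
  assumes "connectedin X S" "openin X E1" "openin X E2" "S \<subseteq> E1 \<union> E2" "E1 \<inter> E2 = {}"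
  shows "S \<subseteq> E1 \<or> S \<subseteq> E2"
  using assms unfolding connectedin by blast

lemma punct_sep:
  fixes Z :: "'z topology"
  assumes W: "openin Z W"
    and punct: "\<forall>z\<in>topspace Z - W. \<exists>U h. openin Z U \<and> z \<in> U \<and> U \<inter> (topspace Z - W) = {z} \<and>
          homeomorphic_map (subtopology Z U) (top_of_set (ball (0::complex) 1)) h \<and> h z = 0"
    and P: "openin Z P" and Q: "openin Z Q" and PQ: "P \<inter> Q = {}" "P \<union> Q = W"
    and K: "connectedin Z K"
  shows "K \<inter> W \<subseteq> P \<or> K \<inter> W \<subseteq> Q"
proof -
  have "\<forall>z\<in>topspace Z - W. \<exists>U. openin Z U \<and> z \<in> U \<and> U - {z} \<subseteq> W \<and> connectedin Z (U - {z}) \<and> U - {z} \<noteq> {}"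
  proof
    fix z assume z: "z \<in> topspace Z - W"
    then obtain U h where U: "openin Z U" "z \<in> U" "U \<inter> (topspace Z - W) = {z}"
      "homeomorphic_map (subtopology Z U) (top_of_set (ball (0::complex) 1)) h" "h z = 0"
      using punct by blast
    have "U \<subseteq> topspace Z" using U(1) openin_subset by blast
    then have "U - {z} \<subseteq> W" using U(3) by blast
    then show "\<exists>U. openin Z U \<and> z \<in> U \<and> U - {z} \<subseteq> W \<and> connectedin Z (U - {z}) \<and> U - {z} \<noteq> {}"
      using U punct_disc[OF U(1,2,4,5)] by blast
  qed
  then obtain Uf where Uf: "\<And>z. z \<in> topspace Z - W \<Longrightarrow> openin Z (Uf z) \<and> z \<in> Uf z \<and> Uf z - {z} \<subseteq> W \<and>
      connectedin Z (Uf z - {z}) \<and> Uf z - {z} \<noteq> {}"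
    by metis
  have dich: "Uf z - {z} \<subseteq> P \<or> Uf z - {z} \<subseteq> Q" if "z \<in> topspace Z - W" for z
    using connectedin_split[OF _ P Q] Uf[OF that] PQ by blast
  define ZP where "ZP = P \<union> {z \<in> topspace Z - W. Uf z - {z} \<subseteq> P}"
  define ZQ where "ZQ = Q \<union> {z \<in> topspace Z - W. Uf z - {z} \<subseteq> Q}"
  have oZP: "openin Z ZP"
    unfolding openin_subopen[of Z ZP]
  proof
    fix x assume "x \<in> ZP"
    then have "x \<in> P \<or> x \<in> {z \<in> topspace Z - W. Uf z - {z} \<subseteq> P}" unfolding ZP_def by blast
    then show "\<exists>T. openin Z T \<and> x \<in> T \<and> T \<subseteq> ZP"
    proof
      assume "x \<in> P" then show ?thesis using P unfolding ZP_def by blast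
    next
      assume x: "x \<in> {z \<in> topspace Z - W. Uf z - {z} \<subseteq> P}"
      then show ?thesis using Uf[of x] unfolding ZP_def by blast
    qed
  qed
  have oZQ: "openin Z ZQ"
    unfolding openin_subopen[of Z ZQ]
  proof
    fix x assume "x \<in> ZQ"
    then have "x \<in> Q \<or> x \<in> {z \<in> topspace Z - W. Uf z - {z} \<subseteq> Q}" unfolding ZQ_def by blast
    then show "\<exists>T. openin Z T \<and> x \<in> T \<and> T \<subseteq> ZQ"
    proof
      assume "x \<in> Q" then show ?thesis using Q unfolding ZQ_def by blast
    next
      assume x: "x \<in> {z \<in> topspace Z - W. Uf z - {z} \<subseteq> Q}"
      then show ?thesis using Uf[of x] unfolding ZQ_def by blast
    qed
  qed
  have PW: "P \<subseteq> W" "Q \<subseteq> W" using PQ by auto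
  have disj: "ZP \<inter> ZQ = {}"
  proof -
    have "z \<notin> ZP \<inter> ZQ" for z
    proof
      assume z: "z \<in> ZP \<inter> ZQ"
      show False
      proof (cases "z \<in> W")
        case True then show False using z PQ unfolding ZP_def ZQ_def by blast
      next
        case False
        then have "z \<in> topspace Z - W" "Uf z - {z} \<subseteq> P" "Uf z - {z} \<subseteq> Q"
          using z PW unfolding ZP_def ZQ_def by blast+
        then show False using Uf[of z] PQ by blast
      qed
    qed
    then show ?thesis by blast
  qed
  have cov: "K \<subseteq> ZP \<union> ZQ"
  proof
    fix x assume x: "x \<in> K"
    then have xt: "x \<in> topspace Z" using connectedin_subset_topspace[OF K] by blast
    show "x \<in> ZP \<union> ZQ"
    proof (cases "x \<in> W")
      case True then show ?thesis using PQ unfolding ZP_def ZQ_def by blast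
    next
      case False then show ?thesis using dich[of x] xt unfolding ZP_def ZQ_def by blast
    qed
  qed
  have "K \<subseteq> ZP \<or> K \<subseteq> ZQ" using connectedin_split[OF K oZP oZQ cov disj] .
  moreover have "ZP \<inter> W \<subseteq> P" "ZQ \<inter> W \<subseteq> Q" unfolding ZP_def ZQ_def by blast+
  ultimately show ?thesis by blast
qed




lemma topspace_rs [simp]: "topspace riemann_sphere = UNIV"
proof -
  have "rs_open UNIV" unfolding rs_open_def by auto
  then have "openin riemann_sphere UNIV"
    unfolding riemann_sphere_def using istopology_rs_open by simp
  then show ?thesis using openin_subset by blast
qed

locale wb =
  fixes \<Omega> :: "nat \<Rightarrow> complex option set" and k :: nat and X :: "complex option set"
    and S :: "complex option \<Rightarrow> complex option"
    and Z :: "'z topology" and j :: "bool \<times> complex option \<Rightarrow> 'z"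
  assumes wbi: "weak_B_involution \<Omega> k X S"
    and ws: "is_welded_surface \<Omega> k X S Z j"
begin

definition "D = (\<Union>i\<in>{1..k}. \<Omega> i)"
definition "B0 = rs_boundary0 \<Omega> k X"
definition "T = D \<union> B0"
definition "cl i = riemann_sphere closure_of (\<Omega> i)"
definition "W = j ` topspace (weld_pre \<Omega> k X)"
abbreviation "RS \<equiv> riemann_sphere"
abbreviation "pre \<equiv> weld_pre \<Omega> k X"

lemma B0_def': "B0 = RS frontier_of D - X"
  unfolding B0_def rs_boundary0_def D_def by (rule refl)

lemmas wbu = wbi[unfolded weak_B_involution_def Let_def D_def[symmetric]]
lemmas c1 = wbu[THEN conjunct1]
lemmas c2 = wbu[THEN conjunct2, THEN conjunct1]
lemmas c8 = wbu[THEN conjunct2, THEN conjunct2, THEN conjunct2, THEN conjunct2, THEN conjunct2,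
  THEN conjunct2, THEN conjunct2, THEN conjunct1]
lemmas c9 = wbu[THEN conjunct2, THEN conjunct2, THEN conjunct2, THEN conjunct2, THEN conjunct2,
  THEN conjunct2, THEN conjunct2, THEN conjunct2, THEN conjunct1]
lemmas c10 = wbu[THEN conjunct2, THEN conjunct2, THEN conjunct2, THEN conjunct2, THEN conjunct2,
  THEN conjunct2, THEN conjunct2, THEN conjunct2, THEN conjunct2, THEN conjunct1]

lemma om_open: "i \<in> {1..k} \<Longrightarrow> openin RS (\<Omega> i)"
  using c1 by blast
lemma om_conn: "i \<in> {1..k} \<Longrightarrow> connectedin RS (\<Omega> i)"
  using c1 by blast
lemma om_ne: "i \<in> {1..k} \<Longrightarrow> \<Omega> i \<noteq> {}"
  using c1 by blast
lemma om_disj: "i \<in> {1..k} \<Longrightarrow> i' \<in> {1..k} \<Longrightarrow> i \<noteq> i' \<Longrightarrow> \<Omega> i \<inter> \<Omega> i' = {}"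
  using c2 by blast

lemma S_bd: "x \<in> RS frontier_of D \<Longrightarrow> S x \<in> RS frontier_of D"
  using c8 by blast
lemma S_X: "x \<in> X \<Longrightarrow> S x \<in> X"
  using c9 by blast
lemma S_inv: "x \<in> RS frontier_of D \<Longrightarrow> S (S x) = x"
  using c10 by blast

lemma S_inv0: "x \<in> B0 \<Longrightarrow> S (S x) = x"
  unfolding B0_def' using S_inv by blast

lemma S_B0: "x \<in> B0 \<Longrightarrow> S x \<in> B0"
proof -
  assume x: "x \<in> B0"
  then have f: "S x \<in> RS frontier_of D" using S_bd unfolding B0_def' by blast
  have "S x \<notin> X"
  proof
    assume "S x \<in> X" then have "S (S x) \<in> X" by (rule S_X)
    then show False using x S_inv0[OF x] unfolding B0_def' by simp
  qed
  then show ?thesis using f unfolding B0_def' by blast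
qed

lemma D_open: "openin RS D"
  unfolding D_def using om_open by blast

lemma B0_D: "B0 \<inter> D = {}"
  unfolding B0_def' frontier_of_def using interior_of_openin[OF D_open] by blast

lemma clD: "RS closure_of D = (\<Union>i\<in>{1..k}. cl i)"
  unfolding D_def cl_def using closure_of_Union[of "\<Omega> ` {1..k}" RS] by simp

lemma B0_cl: "x \<in> B0 \<Longrightarrow> \<exists>i\<in>{1..k}. x \<in> cl i"
  using clD unfolding B0_def' frontier_of_def by blast

lemma T_cl: "x \<in> T \<Longrightarrow> \<exists>i\<in>{1..k}. x \<in> cl i"
  using B0_cl closure_of_subset[of "\<Omega> _" RS] unfolding T_def D_def cl_def by fastforce

lemma om_cl: "\<Omega> i \<subseteq> cl i"
  unfolding cl_def by (simp add: closure_of_subset)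

lemma om_cl_disj: "i \<in> {1..k} \<Longrightarrow> i' \<in> {1..k} \<Longrightarrow> p \<in> \<Omega> i \<Longrightarrow> p \<in> cl i' \<Longrightarrow> i = i'"
  using openin_Int_closure_of_eq_empty[OF om_open, of i "\<Omega> i'"] om_disj unfolding cl_def by blast

lemma ts_pre: "topspace pre = UNIV \<times> T"
  unfolding weld_pre_def T_def D_def B0_def by auto

lemma W_open: "openin Z W"
  and qm: "quotient_map pre (subtopology Z W) j"
  and jeq: "u \<in> topspace pre \<Longrightarrow> v \<in> topspace pre \<Longrightarrow> j u = j v \<longleftrightarrow> weld_rel \<Omega> k X S u v"
  and punct: "\<forall>z\<in>topspace Z - W. \<exists>U h. openin Z U \<and> z \<in> U \<and> U \<inter> (topspace Z - W) = {z} \<and>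
          homeomorphic_map (subtopology Z U) (top_of_set (ball (0::complex) 1)) h \<and> h z = 0"
  using ws unfolding is_welded_surface_def Let_def W_def by blast+

lemma j_cont: "continuous_map pre Z j"
  using quotient_imp_continuous_map[OF qm] continuous_map_into_fulltopology by blast

lemma W_sub: "W \<subseteq> topspace Z"
  using W_open openin_subset by blast


lemma pre_eq: "pre = sum_topology (\<lambda>_. subtopology RS T) UNIV"
  unfolding weld_pre_def T_def D_def B0_def by (rule refl)

lemma piece_eq: "bdry0_piece \<Omega> k X i = B0 \<inter> cl i"
  unfolding bdry0_piece_def B0_def cl_def by (rule refl)

abbreviation "E \<equiv> welding_edge \<Omega> k X S"
abbreviation "V \<equiv> welding_vertices k"
abbreviation "wc \<equiv> welding_component \<Omega> k X S"

lemma edge_sym: "E u v \<Longrightarrow> E v u"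
  unfolding welding_edge_def by blast

lemma edge_V: "E u v \<Longrightarrow> u \<in> V \<and> v \<in> V"
  unfolding welding_edge_def welding_vertices_def by (cases u; cases v) auto

lemma edge_F2:
  assumes x: "x \<in> B0" "x \<in> cl i" and m: "S x \<in> cl m" and i: "i \<in> {1..k}" and mk: "m \<in> {1..k}"
  shows "E (False, i) (True, m)" "E (True, i) (False, m)"
proof -
  have Sx: "S x \<in> B0" using S_B0 x by blast
  have "S x \<in> S ` bdry0_piece \<Omega> k X i \<inter> bdry0_piece \<Omega> k X m"
    using x Sx m unfolding piece_eq by blast
  then show "E (False, i) (True, m)" unfolding welding_edge_def using i mk by auto
  have "x \<in> S ` bdry0_piece \<Omega> k X m \<inter> bdry0_piece \<Omega> k X i"
    using x Sx m S_inv0[OF x(1)] unfolding piece_eq by (metis IntI image_eqI)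
  then show "E (True, i) (False, m)" unfolding welding_edge_def using i mk by auto
qed

lemma edge_F2':
  assumes x: "x \<in> B0" "x \<in> cl i" and m: "S x \<in> cl m" and i: "i \<in> {1..k}" and mk: "m \<in> {1..k}"
  shows "E (b, i) (\<not> b, m)"
  using edge_F2[OF assms] by (cases b) auto

definition "eclosed C \<longleftrightarrow> (\<forall>a b. a \<in> C \<longrightarrow> E a b \<longrightarrow> b \<in> C)"

definition "A C = {(b,p). p \<in> T \<and> (\<exists>i\<in>{1..k}. (b,i) \<in> C \<and> p \<in> cl i)}"

lemma A_sub: "A C \<subseteq> topspace pre"
  unfolding A_def ts_pre by auto

lemma A_closed: "closedin pre (A C)"
  unfolding pre_eq closedin_sum_topology
proof (intro conjI ballI)
  show "A C \<subseteq> Sigma UNIV (topspace \<circ> (\<lambda>_. subtopology RS T))"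
    unfolding A_def by auto
  fix b :: bool
  have e: "{x. (b, x) \<in> A C} = \<Union>(cl ` {i\<in>{1..k}. (b,i) \<in> C}) \<inter> T"
    unfolding A_def by auto
  have "closedin RS (\<Union>(cl ` {i\<in>{1..k}. (b,i) \<in> C}))"
    by (rule closedin_Union) (auto simp: cl_def)
  then show "closedin (subtopology RS T) {x. (b, x) \<in> A C}"
    unfolding e closedin_subtopology by blast
qed

lemma A_cover: "topspace pre \<subseteq> A C \<union> A (V - C)"
proof
  fix u assume "u \<in> topspace pre"
  then obtain b p where u: "u = (b,p)" "p \<in> T" unfolding ts_pre by auto
  then obtain i where i: "i \<in> {1..k}" "p \<in> cl i" using T_cl by blast
  then have "(b,i) \<in> V" unfolding welding_vertices_def by auto
  then show "u \<in> A C \<union> A (V - C)" using u i unfolding A_def by blast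
qed

lemma A_disj:
  assumes C: "eclosed C" "eclosed (V - C)"
  shows "A C \<inter> A (V - C) = {}"
proof -
  have False if u: "(b,p) \<in> A C" "(b,p) \<in> A (V - C)" for b p
  proof -
    obtain i i' where ii: "i \<in> {1..k}" "(b,i) \<in> C" "p \<in> cl i" "i' \<in> {1..k}" "(b,i') \<in> V - C" "p \<in> cl i'"
      and pT: "p \<in> T"
      using u unfolding A_def by blast
    show False
    proof (cases "p \<in> D")
      case True
      then obtain m where "m \<in> {1..k}" "p \<in> \<Omega> m" unfolding D_def by blast
      then have "m = i" "m = i'" using om_cl_disj ii by blast+
      then show False using ii by blast
    next
      case False
      then have pB: "p \<in> B0" using pT unfolding T_def by blast
      then obtain m where m: "m \<in> {1..k}" "S p \<in> cl m" using S_B0 B0_cl by blast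
      have "E (b,i) (\<not>b, m)" "E (b,i') (\<not>b, m)"
        using edge_F2'[OF pB _ m(2)] ii m(1) by blast+
      then show False using C ii unfolding eclosed_def by (meson DiffD2 DiffI edge_sym)
    qed
  qed
  then show ?thesis by auto
qed

lemma A_open:
  assumes C: "eclosed C" "eclosed (V - C)"
  shows "openin pre (A C)"
proof -
  have "A C = topspace pre - A (V - C)"
    using A_cover[of C] A_disj[OF C] A_sub[of C] by blast
  then show ?thesis using A_closed[of "V - C"] by (simp add: openin_diff)
qed

lemma A_sat:
  assumes C: "eclosed C" and u: "u \<in> A C" and v: "v \<in> topspace pre" and r: "weld_rel \<Omega> k X S u v"
  shows "v \<in> A C"
proof -
  have B0T: "B0 \<subseteq> T" unfolding T_def by blast
  from r have "u = v \<or> (fst u = False \<and> fst v = True \<and> snd u \<in> B0 \<and> snd v = S (snd u)) \<or>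
     (fst v = False \<and> fst u = True \<and> snd v \<in> B0 \<and> snd u = S (snd v))"
    unfolding weld_rel_def B0_def by blast
  then show ?thesis
  proof (elim disjE conjE)
    assume "u = v" then show ?thesis using u by simp
  next
    assume h: "fst u = False" "fst v = True" "snd u \<in> B0" "snd v = S (snd u)"
    obtain x where ux: "u = (False, x)" using h by (cases u) auto
    obtain i where i: "i \<in> {1..k}" "(False,i) \<in> C" "x \<in> cl i" using u ux unfolding A_def by blast
    have xB: "x \<in> B0" using h ux by simp
    then obtain m where m: "m \<in> {1..k}" "S x \<in> cl m" using S_B0 B0_cl by blast
    have "E (False,i) (True,m)" using edge_F2(1)[OF xB i(3) m(2) i(1) m(1)] .
    then have "(True,m) \<in> C" using C i unfolding eclosed_def by blast
    moreover have "v = (True, S x)" using h ux by (cases v) auto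
    ultimately show ?thesis using m S_B0[OF xB] B0T unfolding A_def by blast
  next
    assume h: "fst v = False" "fst u = True" "snd v \<in> B0" "snd u = S (snd v)"
    obtain x where vx: "v = (False, x)" using h by (cases v) auto
    have xB: "x \<in> B0" using h vx by simp
    have ux: "u = (True, S x)" using h vx by (cases u) auto
    obtain i where i: "i \<in> {1..k}" "(True,i) \<in> C" "S x \<in> cl i" using u ux unfolding A_def by blast
    obtain m where m: "m \<in> {1..k}" "x \<in> cl m" using B0_cl xB by blast
    have "E (True,i) (False,m)"
      using edge_F2(2)[OF S_B0[OF xB] i(3) _ i(1) m(1)] S_inv0[OF xB] m(2) by simp
    then have "(False,m) \<in> C" using C i unfolding eclosed_def by blast
    then show ?thesis using m xB B0T vx unfolding A_def by blast
  qed
qed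

lemma A_jsat:
  assumes C: "eclosed C" and u: "u \<in> topspace pre" and ju: "j u \<in> j ` A C"
  shows "u \<in> A C"
proof -
  obtain a where a: "a \<in> A C" "j a = j u" using ju by auto
  then have "weld_rel \<Omega> k X S a u" using jeq A_sub u by blast
  then show ?thesis using A_sat[OF C a(1) u] by blast
qed

lemma jA_open:
  assumes C: "eclosed C" "eclosed (V - C)"
  shows "openin Z (j ` A C)"
proof -
  have sub: "j ` A C \<subseteq> topspace (subtopology Z W)"
    using A_sub W_sub unfolding W_def by auto
  have e: "{x \<in> topspace pre. j x \<in> j ` A C} = A C"
    using A_jsat[OF C(1)] A_sub by blast
  have "\<forall>U. U \<subseteq> topspace (subtopology Z W) \<longrightarrow> (openin pre {x \<in> topspace pre. j x \<in> U} \<longleftrightarrow> openin (subtopology Z W) U)"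
    using qm unfolding quotient_map_def by blast
  then have "openin pre {x \<in> topspace pre. j x \<in> j ` A C} \<longleftrightarrow> openin (subtopology Z W) (j ` A C)"
    using sub by blast
  then have "openin (subtopology Z W) (j ` A C)"
    using e A_open[OF C] by simp
  then show ?thesis using openin_trans_full W_open by blast
qed

end



context wb begin

lemma eclosed_wc: "eclosed (wc u)"
proof -
  have "w \<in> wc u" if "v \<in> wc u" "E v w" for v w
  proof -
    have "(u,v) \<in> {(a, b). E a b}\<^sup>*" using that(1) unfolding welding_component_def by blast
    then have "(u,w) \<in> {(a, b). E a b}\<^sup>*" using that(2) by (simp add: rtrancl.rtrancl_into_rtrancl)
    then show ?thesis using edge_V[OF that(2)] unfolding welding_component_def by blast
  qed
  then show ?thesis unfolding eclosed_def by blast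
qed

lemma eclosed_compl: "eclosed C \<Longrightarrow> eclosed (V - C)"
  unfolding eclosed_def using edge_sym edge_V by blast

lemma rt_sym: "(u,v) \<in> {(a, b). E a b}\<^sup>* \<Longrightarrow> (v,u) \<in> {(a, b). E a b}\<^sup>*"
proof -
  assume "(u,v) \<in> {(a, b). E a b}\<^sup>*"
  then have "(v,u) \<in> ({(a, b). E a b}\<inverse>)\<^sup>*" by (simp add: rtrancl_converseI)
  moreover have "{(a, b). E a b}\<inverse> = {(a, b). E a b}" using edge_sym by auto
  ultimately show ?thesis by simp
qed

lemma wc_eq: "v \<in> wc u \<Longrightarrow> wc v = wc u"
proof -
  assume v: "v \<in> wc u"
  then have uv: "(u,v) \<in> {(a, b). E a b}\<^sup>*" unfolding welding_component_def by blast
  then have vu: "(v,u) \<in> {(a, b). E a b}\<^sup>*" by (rule rt_sym)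
  have "(v,w) \<in> {(a, b). E a b}\<^sup>* \<longleftrightarrow> (u,w) \<in> {(a, b). E a b}\<^sup>*" for w
    using uv vu by (meson rtrancl_trans)
  then show ?thesis unfolding welding_component_def by simp
qed

lemma wc_self: "u \<in> V \<Longrightarrow> u \<in> wc u"
  unfolding welding_component_def by blast

lemma T_om: "i \<in> {1..k} \<Longrightarrow> \<Omega> i \<subseteq> T"
  unfolding T_def D_def by blast

lemma conn_piece:
  assumes i: "i \<in> {1..k}" and y: "y \<in> T" "y \<in> cl i"
  shows "connectedin Z (j ` (Pair b ` insert y (\<Omega> i)))"
proof -
  have "connectedin RS (insert y (\<Omega> i))"
    using connectedin_intermediate_closure_of[OF om_conn[OF i], of "insert y (\<Omega> i)"] y om_cl[of i]
    unfolding cl_def by blast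
  then have c: "connectedin (subtopology RS T) (insert y (\<Omega> i))"
    using T_om[OF i] y connectedin_subtopology by blast
  have cm: "continuous_map (subtopology RS T) pre (Pair b)"
    unfolding pre_eq using continuous_map_component_injection[of b UNIV "\<lambda>_. subtopology RS T"] by simp
  show ?thesis
    using connectedin_continuous_map_image[OF j_cont connectedin_continuous_map_image[OF cm c]] .
qed

lemma j_top: "p \<in> T \<Longrightarrow> j (b,p) \<in> topspace Z"
  using W_sub unfolding W_def ts_pre by blast

lemma same_comp:
  assumes i: "i \<in> {1..k}" and p: "p \<in> \<Omega> i" and q: "q \<in> \<Omega> i"
  shows "connected_component_of Z (j (b,p)) (j (b,q))"
proof -
  have "connectedin Z (j ` (Pair b ` insert p (\<Omega> i)))"
    using conn_piece[OF i] p T_om[OF i] om_cl by blast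
  then show ?thesis unfolding connected_component_of_def using p q by blast
qed

lemma edge_core:
  assumes i: "i \<in> {1..k}" and m: "m \<in> {1..k}" and x: "x \<in> B0" "x \<in> cl i" and Sx: "S x \<in> cl m"
    and p: "p \<in> \<Omega> i" and q: "q \<in> \<Omega> m"
  shows "connected_component_of Z (j (False,p)) (j (True,q))"
proof -
  have B0T: "B0 \<subseteq> T" unfolding T_def by blast
  have SxB: "S x \<in> B0" using S_B0[OF x(1)] .
  have c1: "connectedin Z (j ` (Pair False ` insert x (\<Omega> i)))"
    using conn_piece[OF i] x B0T by blast
  have c2: "connectedin Z (j ` (Pair True ` insert (S x) (\<Omega> m)))"
    using conn_piece[OF m] SxB Sx B0T by blast
  have "weld_rel \<Omega> k X S (False, x) (True, S x)"
    using x(1) unfolding weld_rel_def B0_def by simp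
  then have "j (False, x) = j (True, S x)"
    using jeq x(1) SxB B0T unfolding ts_pre by blast
  then have "j (False, x) \<in> j ` (Pair False ` insert x (\<Omega> i)) \<inter> j ` (Pair True ` insert (S x) (\<Omega> m))"
    by blast
  then have "connectedin Z (j ` (Pair False ` insert x (\<Omega> i)) \<union> j ` (Pair True ` insert (S x) (\<Omega> m)))"
    using connectedin_Un[OF c1 c2] by blast
  then show ?thesis unfolding connected_component_of_def using p q by blast
qed

lemma edge_comp:
  assumes e: "E u v" and p: "p \<in> \<Omega> (snd u)" and q: "q \<in> \<Omega> (snd v)"
  shows "connected_component_of Z (j (fst u, p)) (j (fst v, q))"
proof -
  obtain bu i where u: "u = (bu, i)" by (cases u)
  obtain bv m where v: "v = (bv, m)" by (cases v)
  have ik: "i \<in> {1..k}" "m \<in> {1..k}" using e u v unfolding welding_edge_def by auto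
  from e have "(bu = False \<and> bv = True \<and> S ` (B0 \<inter> cl i) \<inter> (B0 \<inter> cl m) \<noteq> {}) \<or>
     (bv = False \<and> bu = True \<and> S ` (B0 \<inter> cl m) \<inter> (B0 \<inter> cl i) \<noteq> {})"
    unfolding welding_edge_def piece_eq u v by simp
  then show ?thesis
  proof
    assume h: "bu = False \<and> bv = True \<and> S ` (B0 \<inter> cl i) \<inter> (B0 \<inter> cl m) \<noteq> {}"
    then obtain x where x: "x \<in> B0" "x \<in> cl i" "S x \<in> cl m" by blast
    show ?thesis using edge_core[OF ik x] p q h u v by simp
  next
    assume h: "bv = False \<and> bu = True \<and> S ` (B0 \<inter> cl m) \<inter> (B0 \<inter> cl i) \<noteq> {}"
    then obtain x where x: "x \<in> B0" "x \<in> cl m" "S x \<in> cl i" by blast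
    have p': "p \<in> \<Omega> i" and q': "q \<in> \<Omega> m" using p q u v by auto
    have "connected_component_of Z (j (False,q)) (j (True,p))" using edge_core[OF ik(2,1) x q' p'] .
    then show ?thesis using h u v connected_component_of_sym by (metis fst_conv)
  qed
qed

lemma path_comp:
  assumes r: "(u,v) \<in> {(a, b). E a b}\<^sup>*" and uV: "u \<in> V"
  shows "\<forall>p\<in>\<Omega> (snd u). \<forall>q\<in>\<Omega> (snd v). connected_component_of Z (j (fst u, p)) (j (fst v, q))"
  using r
proof (induction rule: rtrancl_induct)
  case base
  have "snd u \<in> {1..k}" using uV unfolding welding_vertices_def by auto
  then show ?case using same_comp by blast
next
  case (step y z)
  have yV: "y \<in> V" using edge_V step(2) by auto
  then have "snd y \<in> {1..k}" unfolding welding_vertices_def by auto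
  then obtain r where r: "r \<in> \<Omega> (snd y)" using om_ne by blast
  show ?case
  proof (intro ballI)
    fix p q assume p: "p \<in> \<Omega> (snd u)" and q: "q \<in> \<Omega> (snd z)"
    have "connected_component_of Z (j (fst u, p)) (j (fst y, r))" using step(3) p r by blast
    moreover have "connected_component_of Z (j (fst y, r)) (j (fst z, q))"
    proof -
      have "E y z" using step(2) by (simp only: mem_Collect_eq case_prod_conv)
      then show ?thesis using edge_comp r q by blast
    qed
    ultimately show "connected_component_of Z (j (fst u, p)) (j (fst z, q))"
      by (rule connected_component_of_trans)
  qed
qed

end



context wb begin

lemma wc_sub: "wc u \<subseteq> V"
  unfolding welding_component_def by blast

lemma sep:
  assumes i: "i \<in> {1..k}" and i': "i' \<in> {1..k}" and p: "p \<in> \<Omega> i" and p': "p' \<in> \<Omega> i'"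
    and cc: "connected_component_of Z (j (b,p)) (j (b',p'))"
  shows "(b',i') \<in> wc (b,i)"
proof -
  define C where "C = wc (b,i)"
  have C1: "eclosed C" unfolding C_def by (rule eclosed_wc)
  have C2: "eclosed (V - C)" using eclosed_compl[OF C1] .
  have VVC: "V - (V - C) = C" using wc_sub unfolding C_def by blast
  have C3: "eclosed (V - (V - C))" using C1 VVC by simp
  have P: "openin Z (j ` A C)" using jA_open[OF C1 C2] .
  have Q: "openin Z (j ` A (V - C))" using jA_open[OF C2 C3] .
  have PQ: "j ` A C \<inter> j ` A (V - C) = {}"
  proof -
    have False if a: "a \<in> A C" "a' \<in> A (V - C)" "j a = j a'" for a a'
    proof -
      have "a' \<in> topspace pre" using a(2) A_sub by blast
      moreover have "j a' \<in> j ` A C" using a(1,3) by (metis imageI)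
      ultimately have "a' \<in> A C" using A_jsat[OF C1] by blast
      then show False using A_disj[OF C1 C2] a by blast
    qed
    then show ?thesis by blast
  qed
  have PQW: "j ` A C \<union> j ` A (V - C) = W"
    using A_cover[of C] A_sub[of C] A_sub[of "V - C"] unfolding W_def by blast
  define K where "K = connected_component_of_set Z (j (b,p))"
  have K: "connectedin Z K" unfolding K_def by (rule connectedin_connected_component_of)
  have pT: "p \<in> T" "p' \<in> T" using T_om i i' p p' by blast+
  have jp: "j (b,p) \<in> K"
    using j_top[OF pT(1)] connected_component_of_refl unfolding K_def by fastforce
  have jp': "j (b',p') \<in> K" using cc unfolding K_def by simp
  have W1: "j (b,p) \<in> W" "j (b',p') \<in> W" using pT unfolding W_def ts_pre by auto
  have "(b,i) \<in> V" using i unfolding welding_vertices_def by auto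
  then have "(b,i) \<in> C" unfolding C_def by (rule wc_self)
  then have AP: "(b,p) \<in> A C" using pT p om_cl i unfolding A_def by blast
  have "K \<inter> W \<subseteq> j ` A C \<or> K \<inter> W \<subseteq> j ` A (V - C)"
    using punct_sep[OF W_open punct P Q PQ PQW K] .
  moreover have "\<not> K \<inter> W \<subseteq> j ` A (V - C)" using jp W1 AP PQ by blast
  ultimately have "j (b',p') \<in> j ` A C" using jp' W1 by blast
  then have "(b',p') \<in> A C" using A_jsat[OF C1] pT unfolding ts_pre by blast
  then obtain m where m: "m \<in> {1..k}" "(b',m) \<in> C" "p' \<in> cl m" unfolding A_def by blast
  then have "m = i'" using om_cl_disj[OF i' m(1) p' m(3)] by simp
  then show ?thesis using m unfolding C_def by simp
qed

lemma exist_W: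
  assumes z: "z \<in> W"
  shows "\<exists>b i p. i \<in> {1..k} \<and> p \<in> \<Omega> i \<and> connected_component_of Z z (j (b,p))"
proof -
  obtain b y where y: "z = j (b,y)" "y \<in> T" using z unfolding W_def ts_pre by auto
  obtain i where i: "i \<in> {1..k}" "y \<in> cl i" using T_cl[OF y(2)] by blast
  obtain p where p: "p \<in> \<Omega> i" using om_ne[OF i(1)] by blast
  have "connectedin Z (j ` (Pair b ` insert y (\<Omega> i)))" using conn_piece[OF i(1) y(2) i(2)] .
  then have "connected_component_of Z z (j (b,p))"
    unfolding connected_component_of_def using y p by blast
  then show ?thesis using i p by blast
qed

lemma exist:
  assumes z: "z \<in> topspace Z"
  shows "\<exists>b i p. i \<in> {1..k} \<and> p \<in> \<Omega> i \<and> connected_component_of Z z (j (b,p))"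
proof (cases "z \<in> W")
  case True then show ?thesis using exist_W by blast
next
  case False
  then obtain U h where U: "openin Z U" "z \<in> U" "U \<inter> (topspace Z - W) = {z}"
    "homeomorphic_map (subtopology Z U) (top_of_set (ball (0::complex) 1)) h" "h z = 0"
    using punct z by blast
  have cU: "connectedin Z U" and ne: "U - {z} \<noteq> {}" using punct_disc[OF U(1,2,4,5)] by blast+
  then obtain w where w: "w \<in> U" "w \<noteq> z" by blast
  have "U \<subseteq> topspace Z" using U(1) openin_subset by blast
  then have wW: "w \<in> W" using w U(3) by blast
  have zw: "connected_component_of Z z w" unfolding connected_component_of_def using cU U(2) w(1) by blast
  obtain b i p where bip: "i \<in> {1..k}" "p \<in> \<Omega> i" "connected_component_of Z w (j (b,p))" using exist_W[OF wW] by blast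
  have "connected_component_of Z z (j (b,p))" using connected_component_of_trans[OF zw bip(3)] .
  then show ?thesis using bip(1,2) by blast
qed

definition "Fm K = wc (SOME v. v \<in> V \<and> (\<exists>p\<in>\<Omega> (snd v). j (fst v, p) \<in> K))"

lemma Fprop:
  assumes i: "i \<in> {1..k}" and p: "p \<in> \<Omega> i"
  shows "Fm (connected_component_of_set Z (j (b,p))) = wc (b,i)"
proof -
  let ?K = "connected_component_of_set Z (j (b,p))"
  have pT: "p \<in> T" using T_om i p by blast
  have ex: "\<exists>v. v \<in> V \<and> (\<exists>q\<in>\<Omega> (snd v). j (fst v, q) \<in> ?K)"
  proof (intro exI conjI)
    show "(b,i) \<in> V" using i unfolding welding_vertices_def by auto
    show "\<exists>q\<in>\<Omega> (snd (b,i)). j (fst (b,i), q) \<in> ?K"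
      using p j_top[OF pT] connected_component_of_refl by fastforce
  qed
  define v where "v = (SOME v. v \<in> V \<and> (\<exists>p\<in>\<Omega> (snd v). j (fst v, p) \<in> ?K))"
  have v: "v \<in> V \<and> (\<exists>q\<in>\<Omega> (snd v). j (fst v, q) \<in> ?K)"
    unfolding v_def using someI_ex[OF ex] .
  obtain b0 i0 where v0: "v = (b0, i0)" by (cases v)
  obtain q where q: "q \<in> \<Omega> i0" "connected_component_of Z (j (b,p)) (j (b0,q))" using v v0 by auto
  have i0: "i0 \<in> {1..k}" using v v0 unfolding welding_vertices_def by auto
  have "(b0,i0) \<in> wc (b,i)" using sep[OF i i0 p q(1) q(2)] .
  then have "wc v = wc (b,i)" using wc_eq v0 by simp
  then show ?thesis unfolding Fm_def v_def .
qed

lemma comp_rep: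
  assumes "K \<in> connected_components_of Z"
  shows "\<exists>b i p. i \<in> {1..k} \<and> p \<in> \<Omega> i \<and> K = connected_component_of_set Z (j (b,p))"
proof -
  obtain z where z: "z \<in> topspace Z" "K = connected_component_of_set Z z"
    using assms unfolding connected_components_of_def by blast
  obtain b i p where bip: "i \<in> {1..k}" "p \<in> \<Omega> i" "connected_component_of Z z (j (b,p))"
    using exist[OF z(1)] by blast
  then have "connected_component_of Z z = connected_component_of Z (j (b,p))"
    using connected_component_of_equiv by metis
  then show ?thesis using z bip by auto
qed

lemma main:
  "\<exists>F. bij_betw F (connected_components_of Z) (welding_components \<Omega> k X S) \<and>
           (\<forall>b i p. i \<in> {1..k} \<longrightarrow> p \<in> \<Omega> i \<longrightarrow>
              F (connected_component_of_set Z (j (b, p))) = welding_component \<Omega> k X S (b, i))"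
proof (intro exI conjI allI impI)
  show "Fm (connected_component_of_set Z (j (b, p))) = wc (b, i)" if "i \<in> {1..k}" "p \<in> \<Omega> i" for b i p
    using Fprop that by blast
  show "bij_betw Fm (connected_components_of Z) (welding_components \<Omega> k X S)"
    unfolding bij_betw_def
  proof
    show "inj_on Fm (connected_components_of Z)"
    proof (rule inj_onI)
      fix K1 K2 assume K1: "K1 \<in> connected_components_of Z" and K2: "K2 \<in> connected_components_of Z"
        and eq: "Fm K1 = Fm K2"
      obtain b1 i1 p1 where r1: "i1 \<in> {1..k}" "p1 \<in> \<Omega> i1" "K1 = connected_component_of_set Z (j (b1,p1))"
        using comp_rep[OF K1] by blast
      obtain b2 i2 p2 where r2: "i2 \<in> {1..k}" "p2 \<in> \<Omega> i2" "K2 = connected_component_of_set Z (j (b2,p2))"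
        using comp_rep[OF K2] by blast
      have "wc (b1,i1) = wc (b2,i2)" using eq r1 r2 Fprop by metis
      moreover have "(b2,i2) \<in> V" using r2 unfolding welding_vertices_def by auto
      ultimately have "(b2,i2) \<in> wc (b1,i1)" using wc_self by metis
      then have path: "((b1,i1),(b2,i2)) \<in> {(a, b). E a b}\<^sup>*" unfolding welding_component_def by blast
      have "(b1,i1) \<in> V" using r1 unfolding welding_vertices_def by auto
      then have "connected_component_of Z (j (b1,p1)) (j (b2,p2))"
        using path_comp[OF path] r1 r2 by simp
      then have "connected_component_of Z (j (b1,p1)) = connected_component_of Z (j (b2,p2))"
        using connected_component_of_equiv by metis
      then show "K1 = K2" using r1 r2 by simp
    qed
    show "Fm ` connected_components_of Z = welding_components \<Omega> k X S"
    proof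
      show "Fm ` connected_components_of Z \<subseteq> welding_components \<Omega> k X S"
      proof
        fix F0 assume "F0 \<in> Fm ` connected_components_of Z"
        then obtain K where K: "K \<in> connected_components_of Z" "F0 = Fm K" by blast
        obtain b i p where r: "i \<in> {1..k}" "p \<in> \<Omega> i" "K = connected_component_of_set Z (j (b,p))"
          using comp_rep[OF K(1)] by blast
        have "F0 = wc (b,i)" using K r Fprop by simp
        moreover have "(b,i) \<in> V" using r unfolding welding_vertices_def by auto
        ultimately show "F0 \<in> welding_components \<Omega> k X S" unfolding welding_components_def by blast
      qed
      show "welding_components \<Omega> k X S \<subseteq> Fm ` connected_components_of Z"
      proof
        fix F0 assume "F0 \<in> welding_components \<Omega> k X S"
        then obtain b i where bi: "(b,i) \<in> V" "F0 = wc (b,i)" unfolding welding_components_def by auto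
        have i: "i \<in> {1..k}" using bi unfolding welding_vertices_def by auto
        obtain p where p: "p \<in> \<Omega> i" using om_ne[OF i] by blast
        have "j (b,p) \<in> topspace Z" using j_top T_om[OF i] p by blast
        then have "connected_component_of_set Z (j (b,p)) \<in> connected_components_of Z"
          unfolding connected_components_of_def by blast
        moreover have "Fm (connected_component_of_set Z (j (b,p))) = F0" using Fprop[OF i p] bi by simp
        ultimately show "F0 \<in> Fm ` connected_components_of Z" by blast
      qed
    qed
  qed
qed

end

theorem lemma4p12:
  fixes \<Omega> :: "nat \<Rightarrow> complex option set" and k :: nat and X :: "complex option set"
    and S :: "complex option \<Rightarrow> complex option"
    and Z :: "'z topology" and j :: "bool \<times> complex option \<Rightarrow> 'z"
  assumes "weak_B_involution \<Omega> k X S"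
    and "is_welded_surface \<Omega> k X S Z j"
  shows "\<exists>F. bij_betw F (connected_components_of Z) (welding_components \<Omega> k X S) \<and>
           (\<forall>b i p. i \<in> {1..k} \<longrightarrow> p \<in> \<Omega> i \<longrightarrow>
              F (connected_component_of_set Z (j (b, p))) = welding_component \<Omega> k X S (b, i))"
proof -
  interpret wb \<Omega> k X S Z j using assms by unfold_locales
  show ?thesis by (rule main)
qed


end
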